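(* Let $(W,S)$ be a finitely generated Coxeter system, $u,v\in W$ with $u<v$, and $w,g\in[u,v]$. Then: (a) $v_{S(w)\cup S(g)}$ lies in $[u,v]$ and is the least upper bound $w\vee g$ of $w$ and $g$ in $[u,v]$; moreover $S(w\vee g)=S(w)\cup S(g)$. (b) $v_{S(w)\cap S(g)}$ lies in $[u,v]$ and is the greatest lower bound $w\wedge g$ of $w$ and $g$ in $[u,v]$; moreover $S(w\wedge g)\subseteq S(w)\cap S(g)$.
   Context: $(W,S)$ is a finitely generated Coxeter system with length function $\ell$. For $w\in W$, $S(w)\subseteq S$ is the set of simple reflections appearing in a (any) reduced expression of $w$. For $I\subseteq S$, $W_I$ is the parabolic subgroup generated by $I$, $X_I=\{u\in W:\ell(us)>\ell(u)\ \forall s\in I\}$, and every $w\in W$ factors uniquely as $w=w^Iw_I$ with $w^I\in X_I$, $w_I\in W_I$ (parabolic components along $I$). The partial order on $W$: $u\le v$ iff $v_{S(u)}=u$; $[u,v]=\{w:u\le w\le v\}$. *)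

theory Defs
  imports "HOL-Algebra.Multiplicative_Group"
begin

definition word_eval :: "('a, 'b) monoid_scheme \<Rightarrow> 'a list \<Rightarrow> 'a" where
  "word_eval G xs = foldr (\<lambda>x y. x \<otimes>\<^bsub>G\<^esub> y) xs \<one>\<^bsub>G\<^esub>"

text \<open>Coxeter matrix entry m(s,t) = order of st (0 means infinite).\<close>
definition cox_m :: "('a, 'b) monoid_scheme \<Rightarrow> 'a \<Rightarrow> 'a \<Rightarrow> nat" where
  "cox_m G s t = group.ord G (s \<otimes>\<^bsub>G\<^esub> t)"

definition cox_relators :: "('a, 'b) monoid_scheme \<Rightarrow> 'a set \<Rightarrow> 'a list set" where
  "cox_relators G S = {[s, s] | s. s \<in> S} \<union>
     {concat (replicate (cox_m G s t) [s, t]) | s t. s \<in> S \<and> t \<in> S \<and> cox_m G s t \<noteq> 0}"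

definition cox_step :: "('a, 'b) monoid_scheme \<Rightarrow> 'a set \<Rightarrow> 'a list \<Rightarrow> 'a list \<Rightarrow> bool" where
  "cox_step G S a b \<longleftrightarrow> (\<exists>xs ys r. r \<in> cox_relators G S \<and> a = xs @ ys \<and> b = xs @ r @ ys)"

text \<open>(W,S) is a Coxeter system: W is a group generated by the involutions in S, and
  W has the presentation with generators S and relations (st)^m(s,t) = 1
  (two words in S are equal in W iff they are equivalent modulo the relators).\<close>
definition coxeter_system :: "('a, 'b) monoid_scheme \<Rightarrow> 'a set \<Rightarrow> bool" where
  "coxeter_system G S \<longleftrightarrow> group G \<and> S \<subseteq> carrier G \<and>
     (\<forall>s\<in>S. s \<noteq> \<one>\<^bsub>G\<^esub> \<and> s \<otimes>\<^bsub>G\<^esub> s = \<one>\<^bsub>G\<^esub>) \<and>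
     carrier G = word_eval G ` lists S \<and>
     (\<forall>a\<in>lists S. \<forall>b\<in>lists S.
        word_eval G a = word_eval G b \<longrightarrow> equivclp (cox_step G S) a b)"

definition cox_length :: "('a, 'b) monoid_scheme \<Rightarrow> 'a set \<Rightarrow> 'a \<Rightarrow> nat" where
  "cox_length G S w = (LEAST n. \<exists>xs\<in>lists S. length xs = n \<and> word_eval G xs = w)"

definition reduced_word :: "('a, 'b) monoid_scheme \<Rightarrow> 'a set \<Rightarrow> 'a list \<Rightarrow> 'a \<Rightarrow> bool" where
  "reduced_word G S xs w \<longleftrightarrow> xs \<in> lists S \<and> word_eval G xs = w \<and> length xs = cox_length G S w"

text \<open>S(w): simple reflections occurring in reduced expressions of w
  (independent of the chosen reduced expression).\<close>
definition cox_supp :: "('a, 'b) monoid_scheme \<Rightarrow> 'a set \<Rightarrow> 'a \<Rightarrow> 'a set" where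
  "cox_supp G S w = (\<Union>{set xs | xs. reduced_word G S xs w})"

definition parabolic :: "('a, 'b) monoid_scheme \<Rightarrow> 'a set \<Rightarrow> 'a set" where
  "parabolic G I = word_eval G ` lists I"

definition min_cosets :: "('a, 'b) monoid_scheme \<Rightarrow> 'a set \<Rightarrow> 'a set \<Rightarrow> 'a set" where
  "min_cosets G S I = {u \<in> carrier G. \<forall>s\<in>I. cox_length G S (u \<otimes>\<^bsub>G\<^esub> s) > cox_length G S u}"

text \<open>The parabolic component w_I, where w = w^I w_I with w^I in X_I and w_I in W_I.\<close>
definition par_comp :: "('a, 'b) monoid_scheme \<Rightarrow> 'a set \<Rightarrow> 'a set \<Rightarrow> 'a \<Rightarrow> 'a" where
  "par_comp G S I w = (THE y. y \<in> parabolic G I \<and> w \<otimes>\<^bsub>G\<^esub> inv\<^bsub>G\<^esub> y \<in> min_cosets G S I)"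

definition cox_le :: "('a, 'b) monoid_scheme \<Rightarrow> 'a set \<Rightarrow> 'a \<Rightarrow> 'a \<Rightarrow> bool" where
  "cox_le G S u v \<longleftrightarrow> u \<in> carrier G \<and> v \<in> carrier G \<and> par_comp G S (cox_supp G S u) v = u"

definition cox_interval :: "('a, 'b) monoid_scheme \<Rightarrow> 'a set \<Rightarrow> 'a \<Rightarrow> 'a \<Rightarrow> 'a set" where
  "cox_interval G S u v = {w. cox_le G S u w \<and> cox_le G S w v}"

end

theory Submission
  imports Defs
begin

lemma sum_split_add: "(\<Sum>j<m+n. f j) = (\<Sum>j<m. f j) + (\<Sum>j<n. f (m+j)) " for f :: "nat \<Rightarrow> nat"
  by (induction n) (auto simp: add.assoc)

lemma rev_lists[simp]: "rev xs \<in> lists A \<longleftrightarrow> xs \<in> lists A"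
  by (auto simp: in_lists_conv_set)

locale coxsys =
  fixes G (structure) and S :: "'a set"
  assumes cox: "coxeter_system G S"
begin

lemma grp: "group G" using cox by (simp add: coxeter_system_def)

sublocale group G by (rule grp)

lemma S_carr: "S \<subseteq> carrier G" using cox unfolding coxeter_system_def by blast
lemma S_inv: "s \<in> S \<Longrightarrow> s \<otimes> s = \<one>" using cox by (simp add: coxeter_system_def)
lemma S_ne: "s \<in> S \<Longrightarrow> s \<noteq> \<one>" using cox by (simp add: coxeter_system_def)
lemma S_c: "s \<in> S \<Longrightarrow> s \<in> carrier G" using S_carr by auto
lemma S_inv': "s \<in> S \<Longrightarrow> inv s = s"
  using S_inv S_c by (simp add: inv_equality)
lemma gen: "carrier G = word_eval G ` lists S" using cox by (simp add: coxeter_system_def)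
lemma pres: "a \<in> lists S \<Longrightarrow> b \<in> lists S \<Longrightarrow> word_eval G a = word_eval G b \<Longrightarrow> equivclp (cox_step G S) a b"
  using cox by (simp add: coxeter_system_def)

abbreviation ev where "ev \<equiv> word_eval G"
abbreviation len where "len \<equiv> cox_length G S"
abbreviation del :: "nat \<Rightarrow> 'a list \<Rightarrow> 'a list" where "del i xs \<equiv> take i xs @ drop (Suc i) xs"

lemma ev_Nil[simp]: "ev [] = \<one>" by (simp add: word_eval_def)
lemma ev_Cons[simp]: "ev (x # xs) = x \<otimes> ev xs" by (simp add: word_eval_def)

lemma ev_closed[simp]: "xs \<in> lists S \<Longrightarrow> ev xs \<in> carrier G"
  by (induction xs) (auto intro: S_c)

lemma ev_append: "xs \<in> lists S \<Longrightarrow> ys \<in> lists S \<Longrightarrow> ev (xs @ ys) = ev xs \<otimes> ev ys"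
  by (induction xs) (auto simp: m_assoc S_c)

lemma ev_rev: "xs \<in> lists S \<Longrightarrow> inv (ev xs) = ev (rev xs)"
proof (induction xs)
  case (Cons x xs)
  then show ?case using ev_append[of "rev xs" "[x]"] by (simp add: inv_mult_group S_c S_inv')
qed simp

lemma len_le: "xs \<in> lists S \<Longrightarrow> len (ev xs) \<le> length xs"
  unfolding cox_length_def by (rule Least_le) auto

lemma len_ex: "w \<in> carrier G \<Longrightarrow> \<exists>xs\<in>lists S. length xs = len w \<and> ev xs = w"
proof -
  assume "w \<in> carrier G"
  then obtain xs where "xs \<in> lists S" "ev xs = w" using gen by auto
  then show ?thesis unfolding cox_length_def by (rule_tac LeastI_ex) auto
qed

lemma len_mult: "x \<in> carrier G \<Longrightarrow> y \<in> carrier G \<Longrightarrow> len (x \<otimes> y) \<le> len x + len y"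
proof -
  assume "x \<in> carrier G" "y \<in> carrier G"
  then obtain xs ys where "xs \<in> lists S" "length xs = len x" "ev xs = x"
     "ys \<in> lists S" "length ys = len y" "ev ys = y" using len_ex by metis
  then show ?thesis using len_le[of "xs @ ys"] by (simp add: ev_append)
qed

lemma len_inv: "x \<in> carrier G \<Longrightarrow> len (inv x) \<le> len x"
proof -
  assume "x \<in> carrier G"
  then obtain xs where "xs \<in> lists S" "length xs = len x" "ev xs = x" using len_ex by metis
  then show ?thesis using len_le[of "rev xs"] ev_rev[of xs] by simp
qed

lemma len_inv_eq[simp]: "x \<in> carrier G \<Longrightarrow> len (inv x) = len x"
  by (metis inv_closed inv_inv le_antisym len_inv)

lemma len_one[simp]: "len \<one> = 0"
  using len_le[of "[]"] by simp

lemma len_zero: "w \<in> carrier G \<Longrightarrow> len w = 0 \<Longrightarrow> w = \<one>"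
  using len_ex by fastforce

lemma len_S: "s \<in> S \<Longrightarrow> len s = 1"
proof -
  assume s: "s \<in> S"
  have "len s \<le> 1" using len_le[of "[s]"] s S_c by simp
  moreover have "len s \<noteq> 0" using len_zero S_ne s S_c by blast
  ultimately show ?thesis by simp
qed

lemma cancel1[simp]: "w \<in> carrier G \<Longrightarrow> x \<in> carrier G \<Longrightarrow> w \<otimes> (inv w \<otimes> x) = x"
  by (simp flip: m_assoc)
lemma cancel2[simp]: "w \<in> carrier G \<Longrightarrow> x \<in> carrier G \<Longrightarrow> inv w \<otimes> (w \<otimes> x) = x"
  by (simp flip: m_assoc)

lemma conj_iff: "w \<in> carrier G \<Longrightarrow> r \<in> carrier G \<Longrightarrow> c \<in> carrier G \<Longrightarrow>
  (w \<otimes> r \<otimes> inv w = c) \<longleftrightarrow> (r = inv w \<otimes> c \<otimes> w)"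
proof -
  assume a: "w \<in> carrier G" "r \<in> carrier G" "c \<in> carrier G"
  have 1: "(w \<otimes> r \<otimes> inv w = c) = (w \<otimes> r = c \<otimes> w)" by (rule inv_solve_right') (use a in auto)
  have 2: "(r = inv w \<otimes> (c \<otimes> w)) = (c \<otimes> w = w \<otimes> r)" by (rule inv_solve_left) (use a in auto)
  have 3: "inv w \<otimes> c \<otimes> w = inv w \<otimes> (c \<otimes> w)" by (rule m_assoc) (use a in auto)
  show ?thesis unfolding 1 3 2 by (rule eq_commute)
qed

definition pis :: "'a \<Rightarrow> 'a \<times> bool \<Rightarrow> 'a \<times> bool" where
  "pis s = (\<lambda>(r,b). if s \<in> S \<and> r \<in> carrier G then (s \<otimes> r \<otimes> s, b \<noteq> (r = s)) else (r,b))"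

definition FF :: "'a list \<Rightarrow> 'a \<times> bool \<Rightarrow> 'a \<times> bool" where
  "FF xs = foldr (\<lambda>s f. pis s \<circ> f) xs id"

lemma FF_Nil[simp]: "FF [] = id" by (simp add: FF_def)
lemma FF_Cons[simp]: "FF (s # xs) = pis s \<circ> FF xs" by (simp add: FF_def)
lemma FF_append: "FF (xs @ ys) = FF xs \<circ> FF ys"
  by (induction xs) auto

primrec fl :: "'a list \<Rightarrow> 'a \<Rightarrow> bool" where
  "fl [] r = False"
| "fl (s # xs) r = (fl xs r \<noteq> (ev xs \<otimes> r \<otimes> inv (ev xs) = s))"

lemma FF_formula: "xs \<in> lists S \<Longrightarrow> r \<in> carrier G \<Longrightarrow>
   FF xs (r, b) = (ev xs \<otimes> r \<otimes> inv (ev xs), b \<noteq> fl xs r)"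
proof (induction xs)
  case Nil
  then show ?case by simp
next
  case (Cons s xs)
  then have s: "s \<in> S" "s \<in> carrier G" and xs: "xs \<in> lists S" using S_c by auto
  have c: "ev xs \<otimes> r \<otimes> inv (ev xs) \<in> carrier G" using xs Cons by simp
  have "s \<otimes> (ev xs \<otimes> r \<otimes> inv (ev xs)) \<otimes> s = s \<otimes> ev xs \<otimes> r \<otimes> inv (s \<otimes> ev xs)"
    using s xs Cons.prems by (simp add: m_assoc inv_mult_group S_inv')
  then show ?case using Cons s c by (auto simp: pis_def)
qed

lemma FF_out: "r \<notin> carrier G \<Longrightarrow> FF xs (r, b) = (r, b)"
  by (induction xs) (auto simp: pis_def)

lemma fl_del: "xs \<in> lists S \<Longrightarrow> r \<in> carrier G \<Longrightarrow> fl xs r \<Longrightarrow>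
   \<exists>i<length xs. ev xs \<otimes> r = ev (del i xs)"
proof (induction xs)
  case Nil
  then show ?case by simp
next
  case (Cons s xs)
  then have s: "s \<in> S" "s \<in> carrier G" and xs: "xs \<in> lists S" using S_c by auto
  let ?w = "ev xs"
  have w: "?w \<in> carrier G" using xs by simp
  show ?case
  proof (cases "fl xs r")
    case True
    then obtain i where i: "i < length xs" "?w \<otimes> r = ev (del i xs)" using Cons xs by blast
    have "ev (s # xs) \<otimes> r = s \<otimes> ev (del i xs)" using i s w Cons.prems by (simp add: m_assoc)
    also have "\<dots> = ev (del (Suc i) (s # xs))" by simp
    finally show ?thesis using i by (intro exI[of _ "Suc i"]) simp
  next
    case False
    then have e: "?w \<otimes> r \<otimes> inv ?w = s" using Cons.prems by simp
    have "s \<otimes> ?w \<otimes> r = ?w \<otimes> r \<otimes> inv ?w \<otimes> ?w \<otimes> r" using e by simp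
    also have "\<dots> = ?w \<otimes> (r \<otimes> r)" using w Cons.prems by (simp add: m_assoc)
    also have "r \<otimes> r = \<one>"
    proof -
      have "(?w \<otimes> r \<otimes> inv ?w = s) = (r = inv ?w \<otimes> s \<otimes> ?w)"
        by (rule conj_iff) (use w Cons.prems s in auto)
      then have "r = inv ?w \<otimes> s \<otimes> ?w" using e by blast
      then have "r \<otimes> r = inv ?w \<otimes> (s \<otimes> s) \<otimes> ?w" using w s by (simp add: m_assoc)
      then show ?thesis using s w by (simp add: S_inv)
    qed
    finally have "ev (s # xs) \<otimes> r = ev (del 0 (s # xs))" using w s Cons.prems by (simp add: m_assoc)
    then show ?thesis by blast
  qed
qed

lemma sconj_eq: "s \<in> S \<Longrightarrow> r \<in> carrier G \<Longrightarrow> (s \<otimes> r \<otimes> s = s) \<longleftrightarrow> r = s"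
proof
  assume s: "s \<in> S" and r: "r \<in> carrier G" and e: "s \<otimes> r \<otimes> s = s"
  have "s \<otimes> (s \<otimes> r \<otimes> s) \<otimes> s = (s \<otimes> s) \<otimes> r \<otimes> (s \<otimes> s)" using s r S_c by (simp add: m_assoc)
  then have "r = s \<otimes> (s \<otimes> r \<otimes> s) \<otimes> s" using s r by (simp add: S_inv)
  then show "r = s" using e s by (simp add: S_inv S_c)
next
  assume "s \<in> S" "r = s" then show "s \<otimes> r \<otimes> s = s" by (simp add: S_inv S_c)
qed

lemma FF_ss: "s \<in> S \<Longrightarrow> FF [s, s] = id"
proof
  fix p :: "'a \<times> bool" assume s: "s \<in> S"
  obtain r b where p: "p = (r, b)" by fastforce
  show "FF [s, s] p = id p"
  proof (cases "r \<in> carrier G")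
    case True
    have "s \<otimes> (s \<otimes> r \<otimes> inv s) \<otimes> inv (s \<otimes> \<one>) = (s \<otimes> s) \<otimes> r \<otimes> (s \<otimes> s)" using s True S_c
      by (simp add: S_inv' m_assoc)
    then have "s \<otimes> (s \<otimes> r \<otimes> inv s) \<otimes> inv (s \<otimes> \<one>) = r" using s True by (simp add: S_inv)
    moreover have "FF [s,s] (r,b) = (ev [s,s] \<otimes> r \<otimes> inv (ev [s,s]), b \<noteq> fl [s,s] r)"
      by (rule FF_formula) (use s True in auto)
    moreover have "(r \<otimes> s = \<one>) = (r = s)"
      using inv_equality[of r s] S_inv'[OF s] S_inv[OF s] True S_c[OF s] by auto
    ultimately show ?thesis using s True p S_c[OF s] by (simp add: S_inv' sconj_eq m_assoc S_inv del: FF_Cons)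
  qed (simp add: FF_out p del: FF_Cons)
qed

lemma alt_lists: "s \<in> S \<Longrightarrow> t \<in> S \<Longrightarrow> concat (replicate n [s,t]) \<in> lists S"
  by (induction n) auto

lemma ev_alt: "s \<in> S \<Longrightarrow> t \<in> S \<Longrightarrow> ev (concat (replicate n [s,t])) = (s \<otimes> t) [^] n"
proof (induction n)
  case (Suc n)
  have c: "s \<in> carrier G" "t \<in> carrier G" "ev (concat (replicate n [s,t])) \<in> carrier G"
    using Suc.prems S_c alt_lists by auto
  have "ev (concat (replicate (Suc n) [s,t])) = s \<otimes> (t \<otimes> (s \<otimes> t) [^] n)" using Suc by simp
  also have "\<dots> = (s \<otimes> t) \<otimes> (s \<otimes> t) [^] n" using c by (simp add: m_assoc)
  also have "\<dots> = (s \<otimes> t) [^] Suc n" by (rule nat_pow_Suc2[symmetric]) (use c in simp)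
  finally show ?case .
qed simp

lemma K1: "s \<in> S \<Longrightarrow> t \<in> S \<Longrightarrow> t \<otimes> (s \<otimes> t) [^] (n::nat) = (t \<otimes> s) [^] n \<otimes> t"
proof (induction n)
  case (Suc n)
  have c: "s \<in> carrier G" "t \<in> carrier G" using Suc.prems S_c by auto
  have "t \<otimes> (s \<otimes> t) [^] Suc n = (t \<otimes> (s \<otimes> t) [^] n) \<otimes> (s \<otimes> t)" using c by (simp add: m_assoc)
  also have "\<dots> = (t \<otimes> s) [^] n \<otimes> (t \<otimes> s) \<otimes> t" using Suc c by (simp add: m_assoc)
  also have "\<dots> = (t \<otimes> s) [^] Suc n \<otimes> t" by simp
  finally show ?case .
qed (simp add: S_c)

lemma inv_st: "s \<in> S \<Longrightarrow> t \<in> S \<Longrightarrow> inv (s \<otimes> t) = t \<otimes> s"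
  by (simp add: inv_mult_group S_c S_inv')

lemma inv_pow_st: "s \<in> S \<Longrightarrow> t \<in> S \<Longrightarrow> inv ((s \<otimes> t) [^] (n::nat)) = (t \<otimes> s) [^] n"
  using nat_pow_inv[of "s \<otimes> t" n] inv_st by (simp add: S_c)

lemma fl_alt: assumes st: "s \<in> S" "t \<in> S" and r: "r \<in> carrier G"
  shows "fl (concat (replicate n [s,t])) r =
    odd (\<Sum>j<2*n. if r = (t \<otimes> s) [^] j \<otimes> t then 1 else (0::nat))"
proof (induction n)
  case 0
  then show ?case by simp
next
  case (Suc n)
  define a where "a = s \<otimes> t"
  define q where "q = t \<otimes> s"
  have c: "s \<in> carrier G" "t \<in> carrier G" "a \<in> carrier G" "q \<in> carrier G"
    using st S_c by (auto simp: a_def q_def)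
  let ?xs = "concat (replicate n [s,t])"
  have ev: "ev ?xs = a [^] n" using ev_alt st a_def by simp
  have iv: "inv (a [^] n) = q [^] n" using inv_pow_st st a_def q_def by simp
  have k1: "t \<otimes> a [^] n = q [^] n \<otimes> t" using K1 st a_def q_def by simp
  have c1: "(a [^] n \<otimes> r \<otimes> inv (a [^] n) = t) = (r = q [^] (2*n) \<otimes> t)"
  proof -
    have "(a [^] n \<otimes> r \<otimes> inv (a [^] n) = t) = (r = inv (a [^] n) \<otimes> t \<otimes> a [^] n)"
      by (rule conj_iff) (use c r in auto)
    also have "inv (a [^] n) \<otimes> t \<otimes> a [^] n = q [^] n \<otimes> (q [^] n \<otimes> t)"
      using c by (simp add: iv m_assoc k1)
    also have "\<dots> = q [^] (2*n) \<otimes> t" using c by (simp add: nat_pow_mult mult_2 flip: m_assoc)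
    finally show ?thesis .
  qed
  have c2: "(t \<otimes> a [^] n \<otimes> r \<otimes> inv (t \<otimes> a [^] n) = s) = (r = q [^] Suc (2*n) \<otimes> t)"
  proof -
    have "(t \<otimes> a [^] n \<otimes> r \<otimes> inv (t \<otimes> a [^] n) = s) = (r = inv (t \<otimes> a [^] n) \<otimes> s \<otimes> (t \<otimes> a [^] n))"
      by (rule conj_iff) (use c r in auto)
    also have "inv (t \<otimes> a [^] n) \<otimes> s \<otimes> (t \<otimes> a [^] n) = q [^] n \<otimes> (t \<otimes> s) \<otimes> (q [^] n \<otimes> t)"
    proof -
      have "inv (t \<otimes> a [^] n) = q [^] n \<otimes> t" using c st by (simp add: iv inv_mult_group S_inv')
      then have "inv (t \<otimes> a [^] n) \<otimes> s \<otimes> (t \<otimes> a [^] n) = q [^] n \<otimes> t \<otimes> s \<otimes> (t \<otimes> a [^] n)" by simp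
      also have "\<dots> = q [^] n \<otimes> (t \<otimes> s) \<otimes> (q [^] n \<otimes> t)" unfolding k1 using c by (simp add: m_assoc)
      finally show ?thesis .
    qed
    also have "\<dots> = (q [^] n \<otimes> q) \<otimes> q [^] n \<otimes> t" using c
      by (simp add: q_def[symmetric] m_assoc del: nat_pow_Suc)
    also have "\<dots> = q [^] (Suc n + n) \<otimes> t"
    proof -
      have "q [^] n \<otimes> q = q [^] Suc n" by simp
      then show ?thesis using nat_pow_mult[of q "Suc n" n] c(4) by metis
    qed
    finally show ?thesis by (simp add: mult_2)
  qed
  have e: "concat (replicate (Suc n) [s,t]) = s # t # ?xs" by simp
  have "fl (concat (replicate (Suc n) [s,t])) r =
     ((fl ?xs r \<noteq> (a [^] n \<otimes> r \<otimes> inv (a [^] n) = t)) \<noteq> (t \<otimes> a [^] n \<otimes> r \<otimes> inv (t \<otimes> a [^] n) = s))"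
    unfolding e by (simp add: ev)
  also have "\<dots> = ((fl ?xs r \<noteq> (r = q [^] (2*n) \<otimes> t)) \<noteq> (r = q [^] Suc (2*n) \<otimes> t))"
    using c1 c2 by simp
  also have "\<dots> = odd (\<Sum>j<2*Suc n. if r = q [^] j \<otimes> t then 1 else (0::nat))"
    using Suc.IH by (simp add: q_def)
  finally show ?case by (simp add: q_def)
qed

lemma FF_alt: assumes st: "s \<in> S" "t \<in> S" and m: "ord (s \<otimes> t) \<noteq> 0"
  shows "FF (concat (replicate (ord (s \<otimes> t)) [s,t])) = id"
proof
  fix p :: "'a \<times> bool"
  obtain r b where p: "p = (r, b)" by fastforce
  let ?m = "ord (s \<otimes> t)"
  let ?xs = "concat (replicate ?m [s,t])"
  show "FF ?xs p = id p"
  proof (cases "r \<in> carrier G")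
    case True
    have c: "s \<in> carrier G" "t \<in> carrier G" using st S_c by auto
    have am: "(s \<otimes> t) [^] ?m = \<one>" using c by simp
    have qm: "(t \<otimes> s) [^] ?m = \<one>" using inv_pow_st[OF st, of ?m] am by simp
    define f where "f = (\<lambda>j::nat. if r = (t \<otimes> s) [^] j \<otimes> t then 1 else (0::nat))"
    have fm: "f (?m + j) = f j" for j
    proof -
      have "(t \<otimes> s) [^] (?m + j) = (t \<otimes> s) [^] j"
        using nat_pow_mult[of "t \<otimes> s" ?m j] qm c by simp
      then show ?thesis by (simp add: f_def)
    qed
    have "(\<Sum>j<2*?m. f j) = (\<Sum>j<?m. f j) + (\<Sum>j<?m. f (?m + j))"
      using sum_split_add[where m="?m" and n="?m" and f=f] by (simp add: mult_2)
    also have "\<dots> = 2 * (\<Sum>j<?m. f j)" using fm by simp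
    finally have ev: "\<not> odd (\<Sum>j<2*?m. f j)" by simp
    have "FF ?xs (r,b) = (ev ?xs \<otimes> r \<otimes> inv (ev ?xs), b \<noteq> fl ?xs r)"
      by (rule FF_formula) (use alt_lists st True in auto)
    also have "\<dots> = (r, b)" using fl_alt[OF st True, of ?m] ev ev_alt[OF st, of ?m] am True
      by (simp add: f_def)
    finally show ?thesis using p by simp
  qed (simp add: FF_out p del: FF_Cons)
qed

lemma FF_rel: "r \<in> cox_relators G S \<Longrightarrow> FF r = id"
  unfolding cox_relators_def cox_m_def using FF_ss FF_alt by auto

lemma FF_step: "cox_step G S a b \<Longrightarrow> FF a = FF b"
  unfolding cox_step_def using FF_rel by (auto simp: FF_append)

lemma FF_eq: assumes "a \<in> lists S" "b \<in> lists S" "ev a = ev b" shows "FF a = FF b"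
proof -
  have "equivclp (cox_step G S) a b" using pres assms by blast
  then show ?thesis
  proof (induction rule: equivclp_induct)
    case (step y z)
    then show ?case using FF_step by metis
  qed simp
qed

lemma fl_eq: assumes "a \<in> lists S" "b \<in> lists S" "ev a = ev b" "r \<in> carrier G"
  shows "fl a r = fl b r"
  using FF_eq[OF assms(1-3)] FF_formula[OF assms(1,4), of False] FF_formula[OF assms(2,4), of False]
  by simp

lemma exchange: assumes w: "w \<in> carrier G" and s: "s \<in> S" and l: "len (w \<otimes> s) \<le> len w"
  and xs: "xs \<in> lists S" "ev xs = w"
  shows "\<exists>i<length xs. w \<otimes> s = ev (del i xs)"
proof -
  have sc: "s \<in> carrier G" using s S_c by auto
  obtain ys where ys: "ys \<in> lists S" "length ys = len (w \<otimes> s)" "ev ys = w \<otimes> s"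
    using len_ex[of "w \<otimes> s"] w sc by auto
  have e1: "ev (ys @ [s]) = w" using ys s w sc by (simp add: ev_append m_assoc S_inv)
  have ysl: "ys @ [s] \<in> lists S" using ys s by simp
  have "\<not> fl ys s"
  proof
    assume "fl ys s"
    then obtain i where i: "i < length ys" "ev ys \<otimes> s = ev (del i ys)" using fl_del ys sc by blast
    have "ev (del i ys) = w \<otimes> (s \<otimes> s)" using i(2) ys(3) w sc by (simp add: m_assoc)
    then have "ev (del i ys) = w" using s w by (simp add: S_inv)
    moreover have "del i ys \<in> lists S" using ys by (auto dest: in_set_takeD in_set_dropD)
    ultimately have "len w \<le> length (del i ys)" using len_le by metis
    then show False using i ys l by simp
  qed
  moreover have "fl (ys @ [s]) s = fl xs s" using fl_eq[OF ysl xs(1)] e1 xs sc by simp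
  moreover have "fl (ys @ [s]) s = (\<not> fl ys s)"
  proof -
    have sss: "s \<otimes> s \<otimes> s = s" using s sc by (simp add: S_inv)
    have "FF (ys @ [s]) (s, False) = FF ys (s, True)"
      by (simp add: FF_append pis_def s sc sss)
    then show ?thesis using FF_formula[OF ysl sc, of False] FF_formula[OF ys(1) sc, of True] by simp
  qed
  ultimately have "fl xs s" by simp
  then show ?thesis using fl_del[OF xs(1) sc] xs by simp
qed

lemma len_step: assumes w: "w \<in> carrier G" and s: "s \<in> S"
  shows "len (w \<otimes> s) = Suc (len w) \<or> Suc (len (w \<otimes> s)) = len w"
proof -
  have sc: "s \<in> carrier G" using s S_c by auto
  have a: "len (w \<otimes> s) \<le> Suc (len w)" using len_mult[OF w sc] len_S[OF s] by simp
  have "w = (w \<otimes> s) \<otimes> s" using w sc s by (simp add: m_assoc S_inv)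
  then have b: "len w \<le> Suc (len (w \<otimes> s))" using len_mult[of "w \<otimes> s" s] len_S[OF s] w sc by simp
  show ?thesis
  proof (cases "len (w \<otimes> s) \<le> len w")
    case True
    obtain xs where xs: "xs \<in> lists S" "length xs = len w" "ev xs = w" using len_ex w by blast
    then obtain i where i: "i < length xs" "w \<otimes> s = ev (del i xs)" using exchange[OF w s True] by blast
    have "del i xs \<in> lists S" using xs by (auto dest: in_set_takeD in_set_dropD)
    then have "len (w \<otimes> s) \<le> length (del i xs)" using i len_le by metis
    then have "len (w \<otimes> s) < len w" using i xs by simp
    then show ?thesis using b by simp
  qed (use a in simp)
qed

lemma del_set: "set (del i xs) \<subseteq> set xs"
  using set_take_subset[of i xs] set_drop_subset[of "Suc i" xs] by auto

lemma del_lists: "xs \<in> lists A \<Longrightarrow> del i xs \<in> lists A"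
  using del_set[of i xs] by (metis in_lists_conv_set subsetD)

lemma del_len: "i < length xs \<Longrightarrow> length (del i xs) = length xs - 1"
  by simp

lemma reduce: "xs \<in> lists S \<Longrightarrow> \<exists>ys. set ys \<subseteq> set xs \<and> ys \<in> lists S \<and> ev ys = ev xs \<and> length ys = len (ev xs)"
proof (induction xs rule: rev_induct)
  case Nil
  then show ?case by simp
next
  case (snoc s xs)
  then have s: "s \<in> S" and xs: "xs \<in> lists S" by auto
  have sc: "s \<in> carrier G" using s S_c by auto
  obtain ys where ys: "set ys \<subseteq> set xs" "ys \<in> lists S" "ev ys = ev xs" "length ys = len (ev xs)"
    using snoc xs by blast
  let ?w = "ev xs"
  have w: "?w \<in> carrier G" using xs by simp
  have e: "ev (xs @ [s]) = ?w \<otimes> s" using xs s sc by (simp add: ev_append)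
  show ?case
  proof (cases "len (?w \<otimes> s) = Suc (len ?w)")
    case True
    then show ?thesis using ys s sc e
      by (intro exI[of _ "ys @ [s]"]) (auto simp: ev_append)
  next
    case False
    then have l: "Suc (len (?w \<otimes> s)) = len ?w" using len_step[OF w s] by simp
    then obtain i where i: "i < length ys" "?w \<otimes> s = ev (del i ys)"
      using exchange[OF w s _ ys(2) ys(3)] by auto
    have "set (del i ys) \<subseteq> set (xs @ [s])" using del_set[of i ys] ys(1) by auto
    moreover have "length (del i ys) = len (ev (xs @ [s]))" using i ys(4) l e by simp
    ultimately show ?thesis using i e del_lists[OF ys(2), of i]
      by (intro exI[of _ "del i ys"]) simp
  qed
qed

abbreviation W where "W I \<equiv> parabolic G I"
abbreviation X where "X I \<equiv> min_cosets G S I"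

lemma lists_mono': "I \<subseteq> S \<Longrightarrow> xs \<in> lists I \<Longrightarrow> xs \<in> lists S"
  by auto

lemma W_carr: "I \<subseteq> S \<Longrightarrow> y \<in> W I \<Longrightarrow> y \<in> carrier G"
proof -
  assume I: "I \<subseteq> S" and "y \<in> W I"
  then obtain xs where xs: "xs \<in> lists I" "y = ev xs" unfolding parabolic_def by blast
  then have "xs \<in> lists S" using I lists_mono' by blast
  then show ?thesis using xs by simp
qed

lemma W_one: "\<one> \<in> W I"
  unfolding parabolic_def by (rule image_eqI[of _ _ "[]"]) auto

lemma W_mult: "I \<subseteq> S \<Longrightarrow> x \<in> W I \<Longrightarrow> y \<in> W I \<Longrightarrow> x \<otimes> y \<in> W I"
proof -
  assume I: "I \<subseteq> S" and "x \<in> W I" "y \<in> W I"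
  then obtain xs ys where xs: "xs \<in> lists I" "ys \<in> lists I" "x = ev xs" "y = ev ys"
    unfolding parabolic_def by blast
  have "xs \<in> lists S" "ys \<in> lists S" using xs I lists_mono' by blast+
  then have "x \<otimes> y = ev (xs @ ys)" using xs ev_append by simp
  moreover have "xs @ ys \<in> lists I" using xs by simp
  ultimately show ?thesis unfolding parabolic_def by blast
qed

lemma W_inv: "I \<subseteq> S \<Longrightarrow> x \<in> W I \<Longrightarrow> inv x \<in> W I"
proof -
  assume I: "I \<subseteq> S" and "x \<in> W I"
  then obtain xs where xs: "xs \<in> lists I" "x = ev xs" unfolding parabolic_def by blast
  have "xs \<in> lists S" using xs I lists_mono' by blast
  then have "inv x = ev (rev xs)" using xs ev_rev by simp
  moreover have "rev xs \<in> lists I" using xs by simp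
  ultimately show ?thesis unfolding parabolic_def by blast
qed

lemma W_gen: "s \<in> I \<Longrightarrow> I \<subseteq> S \<Longrightarrow> s \<in> W I"
  unfolding parabolic_def by (rule image_eqI[of _ _ "[s]"]) (auto simp: S_c subsetD)

lemma W_red: "I \<subseteq> S \<Longrightarrow> y \<in> W I \<Longrightarrow> \<exists>ys\<in>lists I. ev ys = y \<and> length ys = len y"
proof -
  assume I: "I \<subseteq> S" and "y \<in> W I"
  then obtain xs where xs: "xs \<in> lists I" "y = ev xs" unfolding parabolic_def by auto
  then obtain ys where "set ys \<subseteq> set xs" "ys \<in> lists S" "ev ys = ev xs" "length ys = len (ev xs)"
    using reduce[of xs] I by auto
  then show ?thesis using xs by (intro bexI[of _ ys]) auto
qed

lemma supp_par_word: "I \<subseteq> S \<Longrightarrow> zs \<in> lists S \<Longrightarrow> ev zs \<in> W I \<Longrightarrow> length zs = len (ev zs) \<Longrightarrow> set zs \<subseteq> I"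
proof (induction zs rule: rev_induct)
  case Nil
  then show ?case by simp
next
  case (snoc s zs)
  then have I: "I \<subseteq> S" and s: "s \<in> S" and zs: "zs \<in> lists S" by auto
  have sc: "s \<in> carrier G" using s S_c by auto
  let ?w' = "ev zs"
  let ?w = "ev (zs @ [s])"
  have w': "?w' \<in> carrier G" using zs by simp
  have ew: "?w = ?w' \<otimes> s" using zs s sc by (simp add: ev_append)
  have w: "?w \<in> carrier G" using ew w' sc by simp
  have ws: "?w \<otimes> s = ?w'" using ew w' sc s by (simp add: m_assoc S_inv)
  have lw: "len ?w = Suc (length zs)" using snoc.prems by simp
  have l1: "len ?w' \<le> length zs" using len_le zs by blast
  have lt: "len (?w \<otimes> s) \<le> len ?w" using ws l1 lw by simp
  have "Suc (len (?w \<otimes> s)) = len ?w" using len_step[OF w s] lt by auto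
  then have red': "length zs = len ?w'" using ws lw by simp
  obtain ys where ys: "ys \<in> lists I" "ev ys = ?w" "length ys = len ?w" using W_red[OF I snoc.prems(3)] by blast
  obtain i where i: "i < length ys" "?w \<otimes> s = ev (del i ys)"
    using exchange[OF w s lt, of ys] ys I by auto
  have w'W: "?w' \<in> W I" using i ws del_lists[OF ys(1), of i] unfolding parabolic_def by auto
  have "set zs \<subseteq> I" using snoc.IH[OF I zs w'W red'] .
  moreover have "s \<in> I"
  proof -
    have "s = inv ?w' \<otimes> ?w" using ew w' sc by (simp flip: m_assoc)
    then have "s \<in> W I" using W_mult[OF I W_inv[OF I w'W] snoc.prems(3)] by simp
    then obtain ys2 where ys2: "ys2 \<in> lists I" "ev ys2 = s" "length ys2 = 1"
      using W_red[OF I] len_S[OF s] by metis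
    then obtain t where "ys2 = [t]" by (cases ys2) auto
    then show ?thesis using ys2 I by (auto simp: S_c)
  qed
  ultimately show ?case by simp
qed

lemma reduced_iff: "reduced_word G S xs w \<longleftrightarrow> xs \<in> lists S \<and> ev xs = w \<and> length xs = len w"
  by (simp add: reduced_word_def)

lemma supp_W: "I \<subseteq> S \<Longrightarrow> w \<in> W I \<Longrightarrow> cox_supp G S w \<subseteq> I"
  unfolding cox_supp_def reduced_iff using supp_par_word by blast

lemma supp_S: "cox_supp G S w \<subseteq> S"
  unfolding cox_supp_def reduced_iff by auto

lemma self_W: "w \<in> carrier G \<Longrightarrow> w \<in> W (cox_supp G S w)"
proof -
  assume "w \<in> carrier G"
  then obtain xs where xs: "xs \<in> lists S" "length xs = len w" "ev xs = w" using len_ex by blast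
  then have "set xs \<subseteq> cox_supp G S w" unfolding cox_supp_def reduced_iff by blast
  then show ?thesis unfolding parabolic_def using xs by auto
qed

lemma M_word: assumes I: "I \<subseteq> S" and u: "u \<in> carrier G" and mn: "\<forall>v\<in>W I. len u \<le> len (u \<otimes> v)"
  shows "vs \<in> lists I \<Longrightarrow> length vs = len (ev vs) \<Longrightarrow> len (u \<otimes> ev vs) = len u + length vs"
proof (induction vs rule: rev_induct)
  case Nil
  then show ?case using u by simp
next
  case (snoc s vs)
  have s: "s \<in> S" "s \<in> I" and vsI: "vs \<in> lists I" using snoc.prems I by auto
  have vs: "vs \<in> lists S" using vsI I lists_mono' by blast
  have sc: "s \<in> carrier G" using s S_c by auto
  let ?v' = "ev vs"
  have v': "?v' \<in> carrier G" using vs by simp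
  have ev: "ev (vs @ [s]) = ?v' \<otimes> s" using vs s sc by (simp add: ev_append)
  have l1: "len ?v' \<le> length vs" using len_le vs by blast
  have l2: "len (?v' \<otimes> s) \<le> Suc (len ?v')" using len_mult[OF v' sc] len_S[OF s(1)] by simp
  have red': "length vs = len ?v'" using l1 l2 snoc.prems(2) ev by simp
  have IH: "len (u \<otimes> ?v') = len u + length vs" using snoc.IH[OF vsI red'] .
  have uv': "u \<otimes> ?v' \<in> carrier G" using u v' by simp
  have "\<not> len (u \<otimes> ?v' \<otimes> s) \<le> len (u \<otimes> ?v')"
  proof
    assume le: "len (u \<otimes> ?v' \<otimes> s) \<le> len (u \<otimes> ?v')"
    obtain us where us: "us \<in> lists S" "length us = len u" "ev us = u" using len_ex u by blast
    have xs: "us @ vs \<in> lists S" "ev (us @ vs) = u \<otimes> ?v'" using us vs by (auto simp: ev_append)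
    obtain i where i: "i < length (us @ vs)" "u \<otimes> ?v' \<otimes> s = ev (del i (us @ vs))"
      using exchange[OF uv' s(1) le xs] by blast
    show False
    proof (cases "i < length us")
      case True
      have d: "del i (us @ vs) = del i us @ vs" using True by simp
      have dl: "del i us \<in> lists S" using del_lists us(1) by blast
      have "u \<otimes> ?v' \<otimes> s = ev (del i us) \<otimes> ?v'" using i(2) d ev_append[OF dl vs] by simp
      then have "ev (del i us) = u \<otimes> ?v' \<otimes> s \<otimes> inv ?v'" using dl v' u sc by (simp add: m_assoc)
      also have "\<dots> = u \<otimes> (?v' \<otimes> s \<otimes> inv ?v')" using v' u sc by (simp add: m_assoc)
      finally have e: "ev (del i us) = u \<otimes> (?v' \<otimes> s \<otimes> inv ?v')" .
      have "?v' \<in> W I" unfolding parabolic_def using vsI by blast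
      then have "?v' \<otimes> s \<otimes> inv ?v' \<in> W I" using W_mult[OF I] W_inv[OF I] W_gen[OF s(2) I] by blast
      then have "len u \<le> len (ev (del i us))" using mn e by simp
      also have "\<dots> \<le> length (del i us)" using len_le dl by blast
      finally show False using True us(2) by simp
    next
      case False
      define j where "j = i - length us"
      have "Suc i - length us = Suc j" using False by (simp add: j_def)
      then have d: "del i (us @ vs) = us @ del j vs" using False by (simp add: j_def)
      have dl: "del j vs \<in> lists S" using del_lists vs by blast
      have "u \<otimes> (?v' \<otimes> s) = u \<otimes> ev (del j vs)" using i(2) d ev_append[OF us(1) dl] us(3) u v' sc by (simp add: m_assoc)
      then have "inv u \<otimes> (u \<otimes> (?v' \<otimes> s)) = inv u \<otimes> (u \<otimes> ev (del j vs))" by simp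
      then have "?v' \<otimes> s = ev (del j vs)" using u v' sc dl by simp
      then have "len (ev (vs @ [s])) \<le> length (del j vs)" using ev len_le dl by metis
      moreover have "j < length vs" using i False j_def by simp
      ultimately show False using snoc.prems(2) by simp
    qed
  qed
  then have "len (u \<otimes> ?v' \<otimes> s) = Suc (len (u \<otimes> ?v'))" using len_step[OF uv' s(1)] by auto
  then show ?case using IH ev u v' sc by (simp add: m_assoc)
qed

lemma M: assumes I: "I \<subseteq> S" and u: "u \<in> carrier G" and mn: "\<forall>v\<in>W I. len u \<le> len (u \<otimes> v)"
  and v: "v \<in> W I" shows "len (u \<otimes> v) = len u + len v"
  using W_red[OF I v] M_word[OF I u mn] by metis

lemma min_exists: assumes I: "I \<subseteq> S" and w: "w \<in> carrier G"
  shows "\<exists>y\<in>W I. \<forall>v\<in>W I. len (w \<otimes> inv y) \<le> len (w \<otimes> inv y \<otimes> v)"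
proof -
  obtain y where y: "y \<in> W I" "\<forall>z. z \<in> W I \<longrightarrow> len (w \<otimes> inv y) \<le> len (w \<otimes> inv z)"
    using ex_has_least_nat[of "\<lambda>y. y \<in> W I" \<one> "\<lambda>y. len (w \<otimes> inv y)"] W_one by blast
  have "len (w \<otimes> inv y) \<le> len (w \<otimes> inv y \<otimes> v)" if v: "v \<in> W I" for v
  proof -
    have c: "v \<in> carrier G" "y \<in> carrier G" using v y W_carr I by auto
    have "inv v \<otimes> y \<in> W I" using W_mult[OF I W_inv[OF I v] y(1)] .
    moreover have "w \<otimes> inv (inv v \<otimes> y) = w \<otimes> inv y \<otimes> v"
      using c w by (simp add: inv_mult_group m_assoc)
    ultimately show ?thesis using y(2) by metis
  qed
  then show ?thesis using y by blast
qed

lemma min_in_X: assumes I: "I \<subseteq> S" and u: "u \<in> carrier G" and mn: "\<forall>v\<in>W I. len u \<le> len (u \<otimes> v)"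
  shows "u \<in> X I"
  unfolding min_cosets_def
proof (intro CollectI conjI ballI u)
  fix s assume s: "s \<in> I"
  have "len u \<le> len (u \<otimes> s)" using mn W_gen[OF s I] by blast
  then show "len u < len (u \<otimes> s)" using len_step[OF u, of s] s I by auto
qed

lemma X_carr: "x \<in> X I \<Longrightarrow> x \<in> carrier G"
  unfolding min_cosets_def by simp

lemma X_min: assumes I: "I \<subseteq> S" and x: "x \<in> X I" shows "\<forall>v\<in>W I. len x \<le> len (x \<otimes> v)"
proof -
  have xc: "x \<in> carrier G" using x X_carr by blast
  obtain y where y: "y \<in> W I" and mn: "\<forall>v\<in>W I. len (x \<otimes> inv y) \<le> len (x \<otimes> inv y \<otimes> v)"
    using min_exists[OF I xc] by blast
  have yc: "y \<in> carrier G" using y W_carr I by blast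
  let ?u = "x \<otimes> inv y"
  have uc: "?u \<in> carrier G" using xc yc by simp
  have xe: "x = ?u \<otimes> y" using xc yc by (simp add: m_assoc)
  have "y = \<one>"
  proof (rule ccontr)
    assume ne: "y \<noteq> \<one>"
    obtain ys where ys: "ys \<in> lists I" "ev ys = y" "length ys = len y" using W_red[OF I y] by blast
    have "ys \<noteq> []" using ys ne by auto
    then obtain ys' s where ysd: "ys = ys' @ [s]" by (metis rev_exhaust)
    have s: "s \<in> I" "s \<in> S" and ys'I: "ys' \<in> lists I" using ys ysd I by auto
    have ys': "ys' \<in> lists S" using ys'I I lists_mono' by blast
    have sc: "s \<in> carrier G" using s S_c by auto
    have "y = ev ys' \<otimes> s" using ys ysd ys' s sc by (simp add: ev_append)
    then have ysE: "y \<otimes> s = ev ys'" using ys' sc s by (simp add: m_assoc S_inv)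
    have ysW: "y \<otimes> s \<in> W I" using ysE ys'I unfolding parabolic_def by blast
    have l: "len (y \<otimes> s) < len y" using ysE len_le[OF ys'] ys ysd by simp
    have "?u \<otimes> (y \<otimes> s) = x \<otimes> s" using xc yc sc by (simp add: m_assoc)
    then have "x \<otimes> s = ?u \<otimes> (y \<otimes> s)" by simp
    then have "len (x \<otimes> s) = len ?u + len (y \<otimes> s)" using M[OF I uc mn ysW] by simp
    also have "\<dots> < len ?u + len y" using l by simp
    also have "\<dots> = len x" using M[OF I uc mn y] xe by simp
    finally show False using x s unfolding min_cosets_def by fastforce
  qed
  then show ?thesis using mn xc by simp
qed

lemma U: "I \<subseteq> S \<Longrightarrow> x \<in> X I \<Longrightarrow> v \<in> W I \<Longrightarrow> len (x \<otimes> v) = len x + len v"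
  using M X_min X_carr by blast

lemma pc_ex1: assumes I: "I \<subseteq> S" and w: "w \<in> carrier G"
  shows "\<exists>!y. y \<in> W I \<and> w \<otimes> inv y \<in> X I"
proof (rule ex_ex1I)
  obtain y where y: "y \<in> W I" and mn: "\<forall>v\<in>W I. len (w \<otimes> inv y) \<le> len (w \<otimes> inv y \<otimes> v)"
    using min_exists[OF I w] by blast
  have "w \<otimes> inv y \<in> X I" using min_in_X[OF I _ mn] w y W_carr[OF I] by simp
  then show "\<exists>y. y \<in> W I \<and> w \<otimes> inv y \<in> X I" using y by blast
next
  fix y1 y2 assume a: "y1 \<in> W I \<and> w \<otimes> inv y1 \<in> X I" "y2 \<in> W I \<and> w \<otimes> inv y2 \<in> X I"
  have c: "y1 \<in> carrier G" "y2 \<in> carrier G" using a W_carr[OF I] by auto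
  let ?z = "y1 \<otimes> inv y2"
  have zW: "?z \<in> W I" using W_mult[OF I] W_inv[OF I] a by blast
  have zc: "?z \<in> carrier G" using c by simp
  have e: "w \<otimes> inv y2 = (w \<otimes> inv y1) \<otimes> ?z" using c w by (simp add: m_assoc)
  have e2: "w \<otimes> inv y1 = (w \<otimes> inv y2) \<otimes> inv ?z" using c w by (simp add: m_assoc inv_mult_group)
  have "len (w \<otimes> inv y2) = len (w \<otimes> inv y1) + len ?z" using U[OF I _ zW] a e by simp
  moreover have "len (w \<otimes> inv y2) \<le> len (w \<otimes> inv y2 \<otimes> inv ?z)"
    using X_min[OF I, of "w \<otimes> inv y2"] a W_inv[OF I zW] by blast
  then have "len (w \<otimes> inv y2) \<le> len (w \<otimes> inv y1)" unfolding e2[symmetric] .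
  ultimately have "len ?z = 0" by simp
  then have "?z = \<one>" using len_zero zc by blast
  then show "y1 = y2" using c inv_solve_right'[of \<one> y1 y2] by simp
qed

lemma pc_props: "I \<subseteq> S \<Longrightarrow> w \<in> carrier G \<Longrightarrow>
  par_comp G S I w \<in> W I \<and> w \<otimes> inv (par_comp G S I w) \<in> X I"
  unfolding par_comp_def by (rule theI') (rule pc_ex1)

lemma pc_eq: "I \<subseteq> S \<Longrightarrow> w \<in> carrier G \<Longrightarrow> y \<in> W I \<Longrightarrow> w \<otimes> inv y \<in> X I \<Longrightarrow> par_comp G S I w = y"
  unfolding par_comp_def by (rule the1_equality[OF pc_ex1]) auto

lemma pc_carr: "I \<subseteq> S \<Longrightarrow> w \<in> carrier G \<Longrightarrow> par_comp G S I w \<in> carrier G"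
  using pc_props W_carr by blast

abbreviation cs where "cs \<equiv> cox_supp G S"
abbreviation pc where "pc \<equiv> par_comp G S"

lemma W_mono: "I \<subseteq> J \<Longrightarrow> W I \<subseteq> W J"
  unfolding parabolic_def using lists_mono by blast

lemma supp_suffix: assumes x: "x \<in> carrier G" and y: "y \<in> carrier G"
  and l: "len (x \<otimes> y) = len x + len y" shows "cs y \<subseteq> cs (x \<otimes> y)"
proof
  fix a assume "a \<in> cs y"
  then obtain ys where ys: "ys \<in> lists S" "ev ys = y" "length ys = len y" "a \<in> set ys"
    unfolding cox_supp_def reduced_iff by blast
  obtain xs where xs: "xs \<in> lists S" "length xs = len x" "ev xs = x" using len_ex x by blast
  have "reduced_word G S (xs @ ys) (x \<otimes> y)" unfolding reduced_iff
    using xs ys l by (simp add: ev_append)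
  then show "a \<in> cs (x \<otimes> y)" unfolding cox_supp_def using ys(4) by auto
qed

lemma supp_pc: assumes I: "I \<subseteq> S" and w: "w \<in> carrier G" shows "cs (pc I w) \<subseteq> cs w"
proof -
  let ?y = "pc I w"
  have p: "?y \<in> W I" "w \<otimes> inv ?y \<in> X I" using pc_props[OF I w] by auto
  have yc: "?y \<in> carrier G" using p W_carr I by blast
  have e: "(w \<otimes> inv ?y) \<otimes> ?y = w" using w yc by (simp add: m_assoc)
  have "len ((w \<otimes> inv ?y) \<otimes> ?y) = len (w \<otimes> inv ?y) + len ?y" using U[OF I p(2) p(1)] .
  then have "cs ?y \<subseteq> cs ((w \<otimes> inv ?y) \<otimes> ?y)" using supp_suffix w yc by simp
  then show ?thesis using e by simp
qed

lemma supp_pc_I: "I \<subseteq> S \<Longrightarrow> w \<in> carrier G \<Longrightarrow> cs (pc I w) \<subseteq> I"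
  using pc_props supp_W by blast

lemma one_X: "I \<subseteq> S \<Longrightarrow> \<one> \<in> X I"
  using min_in_X[of I \<one>] W_carr by simp

lemma pc_W: assumes I: "I \<subseteq> S" and y: "y \<in> W I" shows "pc I y = y"
proof -
  have yc: "y \<in> carrier G" using y W_carr I by blast
  show ?thesis using pc_eq[OF I yc y] one_X[OF I] yc by simp
qed

lemma pc_trans: assumes IJ: "I \<subseteq> J" and J: "J \<subseteq> S" and w: "w \<in> carrier G"
  shows "pc I (pc J w) = pc I w"
proof -
  have I: "I \<subseteq> S" using IJ J by blast
  let ?y = "pc J w"
  have py: "?y \<in> W J" "w \<otimes> inv ?y \<in> X J" using pc_props[OF J w] by auto
  have yc: "?y \<in> carrier G" using py W_carr J by blast
  let ?z = "pc I ?y"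
  have pz: "?z \<in> W I" "?y \<otimes> inv ?z \<in> X I" using pc_props[OF I yc] by auto
  have zc: "?z \<in> carrier G" using pz W_carr I by blast
  let ?x = "w \<otimes> inv ?y" and ?x' = "?y \<otimes> inv ?z"
  have xc: "?x \<in> carrier G" "?x' \<in> carrier G" using w yc zc by auto
  have e: "w \<otimes> inv ?z = ?x \<otimes> ?x'" using w yc zc by (simp add: m_assoc)
  have x'W: "?x' \<in> W J" using W_mult[OF J py(1) W_inv[OF J]] pz(1) W_mono[OF IJ] by blast
  have "?x \<otimes> ?x' \<in> X I"
    unfolding min_cosets_def
  proof (intro CollectI conjI ballI)
    show "?x \<otimes> ?x' \<in> carrier G" using xc by simp
  next
    fix s assume s: "s \<in> I"
    have sc: "s \<in> carrier G" using s I S_c by blast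
    have sW: "?x' \<otimes> s \<in> W J" using W_mult[OF J x'W W_gen[of s J]] s IJ J by blast
    have "len (?x \<otimes> ?x') = len ?x + len ?x'" using U[OF J py(2) x'W] .
    moreover have "len (?x \<otimes> (?x' \<otimes> s)) = len ?x + len (?x' \<otimes> s)" using U[OF J py(2) sW] .
    moreover have "len ?x' < len (?x' \<otimes> s)" using pz(2) s unfolding min_cosets_def by blast
    moreover have "?x \<otimes> ?x' \<otimes> s = ?x \<otimes> (?x' \<otimes> s)" using xc sc by (simp add: m_assoc)
    ultimately show "len (?x \<otimes> ?x') < len (?x \<otimes> ?x' \<otimes> s)" by simp
  qed
  then have "pc I w = ?z" using pc_eq[OF I w pz(1)] e by simp
  then show ?thesis by simp
qed

lemma le_iff: "cox_le G S a b \<longleftrightarrow> a \<in> carrier G \<and> b \<in> carrier G \<and> pc (cs a) b = a"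
  by (simp add: cox_le_def)

lemma le_supp: "cox_le G S a b \<Longrightarrow> cs a \<subseteq> cs b"
  using supp_pc[OF supp_S] unfolding le_iff by metis

lemma main:
  assumes uv: "cox_le G S u v"
    and w: "w \<in> cox_interval G S u v" and g: "g \<in> cox_interval G S u v"
  shows "(let j = par_comp G S (cox_supp G S w \<union> cox_supp G S g) v in
            j \<in> cox_interval G S u v \<and> cox_le G S w j \<and> cox_le G S g j \<and>
            (\<forall>z\<in>cox_interval G S u v. cox_le G S w z \<and> cox_le G S g z \<longrightarrow> cox_le G S j z) \<and>
            cox_supp G S j = cox_supp G S w \<union> cox_supp G S g)
       \<and> (let m = par_comp G S (cox_supp G S w \<inter> cox_supp G S g) v in
            m \<in> cox_interval G S u v \<and> cox_le G S m w \<and> cox_le G S m g \<and>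
            (\<forall>z\<in>cox_interval G S u v. cox_le G S z w \<and> cox_le G S z g \<longrightarrow> cox_le G S z m) \<and>
            cox_supp G S m \<subseteq> cox_supp G S w \<inter> cox_supp G S g)"
proof -
  have uw: "cox_le G S u w" and wv: "cox_le G S w v" using w unfolding cox_interval_def by auto
  have ug: "cox_le G S u g" and gv: "cox_le G S g v" using g unfolding cox_interval_def by auto
  have vc: "v \<in> carrier G" and uc: "u \<in> carrier G" using uv le_iff by auto
  have wc: "w \<in> carrier G" and gc: "g \<in> carrier G" using wv gv le_iff by auto
  have hw: "pc (cs w) v = w" and hg: "pc (cs g) v = g" and hu: "pc (cs u) v = u"
    using wv gv uv le_iff by auto
  have suw: "cs u \<subseteq> cs w" and sug: "cs u \<subseteq> cs g" using le_supp uw ug by auto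
  have Sw: "cs w \<subseteq> S" and Sg: "cs g \<subseteq> S" using supp_S by auto
  define J where "J = cs w \<union> cs g"
  define K where "K = cs w \<inter> cs g"
  have JS: "J \<subseteq> S" and KS: "K \<subseteq> S" using Sw Sg J_def K_def by auto
  define j where "j = pc J v"
  define m where "m = pc K v"
  have jc: "j \<in> carrier G" using pc_carr[OF JS vc] j_def by simp
  have mc: "m \<in> carrier G" using pc_carr[OF KS vc] m_def by simp
  have sj: "cs j \<subseteq> J" using supp_pc_I[OF JS vc] j_def by simp
  have wj: "cox_le G S w j" unfolding le_iff using wc jc pc_trans[OF _ JS vc, of "cs w"] hw J_def j_def by auto
  have gj: "cox_le G S g j" unfolding le_iff using gc jc pc_trans[OF _ JS vc, of "cs g"] hg J_def j_def by auto
  have sjeq: "cs j = J" using sj le_supp[OF wj] le_supp[OF gj] J_def by auto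
  have uj: "cox_le G S u j" unfolding le_iff using uc jc pc_trans[OF _ JS vc, of "cs u"] hu suw J_def j_def by auto
  have jv: "cox_le G S j v" unfolding le_iff using jc vc sjeq j_def by simp
  have jlub: "cox_le G S j z" if z: "z \<in> cox_interval G S u v" "cox_le G S w z" "cox_le G S g z" for z
  proof -
    have zv: "cox_le G S z v" using z unfolding cox_interval_def by auto
    have zc: "z \<in> carrier G" and hz: "pc (cs z) v = z" using zv le_iff by auto
    have Jz: "J \<subseteq> cs z" using le_supp[OF z(2)] le_supp[OF z(3)] J_def by auto
    have "pc J z = j" using pc_trans[OF Jz supp_S vc] hz j_def by simp
    then show ?thesis unfolding le_iff using jc zc sjeq by simp
  qed
  have sm: "cs m \<subseteq> K" using supp_pc_I[OF KS vc] m_def by simp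
  have mW: "m \<in> W (cs m)" using self_W[OF mc] .
  have um: "cox_le G S u m" unfolding le_iff using uc mc pc_trans[OF _ KS vc, of "cs u"] hu suw sug K_def m_def by auto
  have mv: "cox_le G S m v"
  proof -
    have "pc (cs m) v = pc (cs m) m" using pc_trans[OF sm KS vc] m_def by simp
    also have "\<dots> = m" using pc_W[OF supp_S mW] .
    finally show ?thesis unfolding le_iff using mc vc by simp
  qed
  have mw: "cox_le G S m w"
  proof -
    have "pc (cs m) w = pc (cs m) v" using pc_trans[OF _ Sw vc, of "cs m"] sm K_def hw by auto
    then show ?thesis using mv unfolding le_iff using wc by simp
  qed
  have mg: "cox_le G S m g"
  proof -
    have "pc (cs m) g = pc (cs m) v" using pc_trans[OF _ Sg vc, of "cs m"] sm K_def hg by auto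
    then show ?thesis using mv unfolding le_iff using gc by simp
  qed
  have mglb: "cox_le G S z m" if z: "z \<in> cox_interval G S u v" "cox_le G S z w" "cox_le G S z g" for z
  proof -
    have zv: "cox_le G S z v" using z unfolding cox_interval_def by auto
    have zc: "z \<in> carrier G" and hz: "pc (cs z) v = z" using zv le_iff by auto
    have zK: "cs z \<subseteq> K" using le_supp[OF z(2)] le_supp[OF z(3)] K_def by auto
    have "pc (cs z) m = z" using pc_trans[OF zK KS vc] hz m_def by simp
    then show ?thesis unfolding le_iff using mc zc by simp
  qed
  show ?thesis
    unfolding Let_def J_def[symmetric] K_def[symmetric] j_def[symmetric] m_def[symmetric]
    using wj gj sjeq uj jv jlub um mv mw mg mglb sm
    unfolding cox_interval_def K_def by auto
qed

end

theorem mainTheorem8: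
  fixes G (structure) and S :: "'a set" and u v w g :: 'a
  assumes cox: "coxeter_system G S" and fin: "finite S"
    and uv: "cox_le G S u v" and uv_ne: "u \<noteq> v"
    and w: "w \<in> cox_interval G S u v" and g: "g \<in> cox_interval G S u v"
  shows "(let j = par_comp G S (cox_supp G S w \<union> cox_supp G S g) v in
            j \<in> cox_interval G S u v \<and> cox_le G S w j \<and> cox_le G S g j \<and>
            (\<forall>z\<in>cox_interval G S u v. cox_le G S w z \<and> cox_le G S g z \<longrightarrow> cox_le G S j z) \<and>
            cox_supp G S j = cox_supp G S w \<union> cox_supp G S g)
       \<and> (let m = par_comp G S (cox_supp G S w \<inter> cox_supp G S g) v in
            m \<in> cox_interval G S u v \<and> cox_le G S m w \<and> cox_le G S m g \<and>
            (\<forall>z\<in>cox_interval G S u v. cox_le G S z w \<and> cox_le G S z g \<longrightarrow> cox_le G S z m) \<and>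
            cox_supp G S m \<subseteq> cox_supp G S w \<inter> cox_supp G S g)"
proof -
  interpret coxsys G S by unfold_locales (rule cox)
  show ?thesis by (rule main[OF uv w g])
qed

end
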